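(* Let $A\in\mathbb{R}^{n\times n}$ be Hurwitz, $B\in\mathbb{R}^{n\times 1}$, $C\in\mathbb{R}^{1\times n}$, and for $p_1>0$ define $$f(p_1)=2\,C(p_1I-A)^{-1}\big(p_1BB^T\big)(p_1I-A)^{-T}C^T .$$ Define $T_2=-C$, $T_4=A^{-1}$, $T_6=A^{-1}BB^TA^{-T}$, $T_3=T_6C^T$, $T_5=-(T_6T_4^T+T_4T_6^T)$. Suppose $\gamma\in\mathbb{R}$ and $S\in\mathbb{R}^{n\times n}$ satisfy the linear matrix inequalities $$S+S^T\succeq 0,\qquad L:=\begin{bmatrix}\gamma^2 & T_3^T-T_2S^T\\ T_3-ST_2^T & -ST_4^T-T_4S^T+T_5\end{bmatrix}\succeq 0 .$$ Then $\gamma^2\ge f(p_1)$ for all $p_1>0$. Consequently, an upper bound on $\sup_{p_1>0}f(p_1)$ is obtained by minimizing $\gamma^2$ over $(\gamma,S)$ subject to these LMIs.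
   Context: $A$ Hurwitz means all eigenvalues of $A$ have negative real part (so $A$ is invertible and $p_1I-A$ is invertible for $p_1>0$). $X\succeq 0$ means $X$ is symmetric positive semidefinite; $X^{-T}=(X^{-1})^T$. Interpretation: $f(p_1)$ equals the squared $\mathcal{H}_2$ norm of the first-order model $G_1(s)=b_1/(s+p_1)$ with $b_1=2p_1C(p_1I-A)^{-1}B$, i.e. the first-order model with pole $-p_1$ interpolating $G(s)=C(sI-A)^{-1}B$ at $s=p_1$. *)

theory Defs
  imports "HOL-Analysis.Analysis"
begin

definition cmat :: "real^'n^'n \<Rightarrow> complex^'n^'n" where
  "cmat A = (\<chi> i j. complex_of_real (A $ i $ j))"

definition hurwitz :: "real^'n^'n \<Rightarrow> bool" where
  "hurwitz A \<longleftrightarrow> (\<forall>z::complex. (\<exists>v::complex^'n. v \<noteq> 0 \<and> cmat A *v v = z *s v) \<longrightarrow> Re z < 0)"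

definition psd :: "real^'m^'m \<Rightarrow> bool" where
  "psd X \<longleftrightarrow> transpose X = X \<and> (\<forall>x. 0 \<le> x \<bullet> (X *v x))"

definition outer :: "real^'n \<Rightarrow> real^'n \<Rightarrow> real^'n^'n" where
  "outer u v = (\<chi> i j. u $ i * v $ j)"

text \<open>f(p) = 2 C (pI-A)^{-1} (p B B^T) (pI-A)^{-T} C^T, with B a column, C a row (stored as vectors).\<close>
definition fH2 :: "real^'n^'n \<Rightarrow> real^'n \<Rightarrow> real^'n \<Rightarrow> real \<Rightarrow> real" where
  "fH2 A B C p = 2 * (C \<bullet> ((matrix_inv (p *\<^sub>R mat 1 - A) ** (p *\<^sub>R outer B B)
       ** transpose (matrix_inv (p *\<^sub>R mat 1 - A))) *v C))"

text \<open>The block matrix L indexed by unit + 'n: first row/column is the scalar block.\<close>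
definition blockmat :: "real \<Rightarrow> real^'n \<Rightarrow> real^'n \<Rightarrow> real^'n^'n \<Rightarrow> real^(unit + 'n)^(unit + 'n)" where
  "blockmat a r c D = (\<chi> i j. case i of
      Inl _ \<Rightarrow> (case j of Inl _ \<Rightarrow> a | Inr j' \<Rightarrow> r $ j')
    | Inr i' \<Rightarrow> (case j of Inl _ \<Rightarrow> c $ i' | Inr j' \<Rightarrow> D $ i' $ j'))"

end

theory Submission
  imports Defs
begin

lemma minv: "invertible (A::real^'n^'n) \<Longrightarrow> A ** matrix_inv A = mat 1 \<and> matrix_inv A ** A = mat 1"
  unfolding matrix_inv_def invertible_def by (rule someI_ex)

lemma inv_ker: "(\<forall>x. (A::real^'n^'n) *v x = 0 \<longrightarrow> x = 0) \<Longrightarrow> invertible A"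
  using matrix_left_invertible_ker invertible_left_inverse by blast

lemma cmat_eig:
  fixes A :: "real^'n^'n"
  assumes "A *v x = c *\<^sub>R x" "x \<noteq> 0"
  shows "\<exists>v::complex^'n. v \<noteq> 0 \<and> cmat A *v v = complex_of_real c *s v"
proof (intro exI conjI)
  let ?v = "\<chi> i. complex_of_real (x $ i)"
  show "?v \<noteq> 0" using assms(2) by (auto simp: vec_eq_iff)
  have "(A *v x) $ i = c * x $ i" for i using assms(1) by (simp add: vec_eq_iff)
  then show "cmat A *v ?v = complex_of_real c *s ?v"
    by (auto simp: vec_eq_iff cmat_def matrix_vector_mult_def simp flip: of_real_mult of_real_sum)
qed

lemma mv_minus: "(- (M::real^'n^'n)) *v x = - (M *v x)" "M *v (- x) = - (M *v x)"
  by (simp_all add: matrix_vector_mult_def vec_eq_iff sum_negf)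

lemma dotT: "x \<bullet> ((M::real^'n^'n) *v y) = (transpose M *v x) \<bullet> y"
  by (simp add: dot_lmul_matrix)

lemma outer_mv: "outer B B *v x = (B \<bullet> x) *\<^sub>R B"
  by (simp add: outer_def matrix_vector_mult_def vec_eq_iff inner_vec_def sum_distrib_left
      sum_distrib_right mult.commute mult.left_commute)

lemma sum_plus_unit: "(\<Sum>i\<in>(UNIV::(unit+'n::finite) set). f i) = f (Inl ()) + (\<Sum>j\<in>UNIV. f (Inr j))"
proof -
  have U: "(UNIV::(unit+'n) set) = insert (Inl ()) (range Inr)"
  proof (intro set_eqI iffI)
    fix x :: "unit+'n" show "x \<in> insert (Inl ()) (range Inr)" by (cases x) auto
  qed auto
  show ?thesis unfolding U
    by (subst sum.insert) (auto simp: sum.reindex)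
qed

lemma block_quad:
  fixes y r :: "real^'n" and D :: "real^'n^'n"
  defines "x \<equiv> (\<chi> i. case i of Inl _ \<Rightarrow> 1 | Inr j \<Rightarrow> y $ j) :: real^(unit+'n)"
  shows "x \<bullet> (blockmat a r r D *v x) = a + 2 * (y \<bullet> r) + y \<bullet> (D *v y)"
  by (simp add: x_def blockmat_def inner_vec_def matrix_vector_mult_def sum_plus_unit
      sum.distrib sum_distrib_left algebra_simps)

theorem proposition1:
  fixes A S :: "real^'n^'n" and B C :: "real^'n" and \<gamma> :: real
  assumes "hurwitz A"
  defines "T2 \<equiv> - C"
      and "T4 \<equiv> matrix_inv A"
      and "T6 \<equiv> matrix_inv A ** outer B B ** transpose (matrix_inv A)"
  defines "T3 \<equiv> T6 *v C"
      and "T5 \<equiv> - (T6 ** transpose T4 + T4 ** transpose T6)"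
  assumes "psd (S + transpose S)"
      and "psd (blockmat (\<gamma>^2) (T3 - S *v T2) (T3 - S *v T2)
                 (- (S ** transpose T4) - T4 ** transpose S + T5))"
  shows "\<forall>p1 > 0. \<gamma>^2 \<ge> fH2 A B C p1"
proof (intro allI impI)
  fix p :: real assume p: "p > 0"
  have invA: "invertible A"
  proof (rule inv_ker, intro allI impI, rule ccontr)
    fix x assume "A *v x = 0" "x \<noteq> 0"
    then have "A *v x = 0 *\<^sub>R x" by simp
    from cmat_eig[OF this \<open>x \<noteq> 0\<close>] assms(1) show False
      unfolding hurwitz_def by fastforce
  qed
  have invP: "invertible (p *\<^sub>R mat 1 - A)"
  proof (rule inv_ker, intro allI impI, rule ccontr)
    fix x assume "(p *\<^sub>R mat 1 - A) *v x = 0" "x \<noteq> 0"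
    then have "A *v x = p *\<^sub>R x"
      by (simp add: matrix_vector_mult_diff_rdistrib flip: scaleR_matrix_vector_assoc)
    from cmat_eig[OF this \<open>x \<noteq> 0\<close>] assms(1) p show False
      unfolding hurwitz_def by fastforce
  qed
  define Ai where "Ai = matrix_inv A"
  define Mi where "Mi = matrix_inv (p *\<^sub>R mat 1 - A)"
  define u where "u = transpose Mi *v C"
  define w where "w = transpose A *v u"
  have u': "C v* Mi = u" by (simp add: u_def)
  define P where "P = S + T6"
  have AAi: "A ** Ai = mat 1" "Ai ** A = mat 1" using minv[OF invA] Ai_def by auto
  have MMi: "(p *\<^sub>R mat 1 - A) ** Mi = mat 1" "Mi ** (p *\<^sub>R mat 1 - A) = mat 1"
    using minv[OF invP] Mi_def by auto
  have Aiw: "transpose Ai *v w = u"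
    unfolding w_def matrix_vector_mul_assoc
    by (simp flip: matrix_transpose_mul add: AAi)
  have Cu: "C = p *\<^sub>R u - w"
  proof -
    have "transpose (p *\<^sub>R mat 1 - A) *v u = C"
      unfolding u_def matrix_vector_mul_assoc
      by (simp flip: matrix_transpose_mul add: MMi)
    moreover have "transpose (p *\<^sub>R mat 1 - A) = p *\<^sub>R mat 1 - transpose A"
      by (simp add: transpose_def vec_eq_iff mat_def)
    ultimately show ?thesis unfolding w_def
      by (simp add: matrix_vector_mult_diff_rdistrib algebra_simps flip: scaleR_matrix_vector_assoc)
  qed
  have f: "fH2 A B C p = 2 * p * (B \<bullet> u)^2"
  proof -
    have "(Mi ** (p *\<^sub>R outer B B) ** transpose Mi) *v C = Mi *v (p *\<^sub>R (outer B B *v u))"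
    proof -
      have "(Mi ** (p *\<^sub>R outer B B) ** transpose Mi) *v C = Mi *v ((p *\<^sub>R outer B B) *v u)"
        unfolding u_def by (metis matrix_vector_mul_assoc matrix_mul_assoc)
      then show ?thesis by (simp flip: scaleR_matrix_vector_assoc)
    qed
    then have "fH2 A B C p = 2 * (C \<bullet> (Mi *v (p *\<^sub>R ((B \<bullet> u) *\<^sub>R B))))"
      unfolding fH2_def Mi_def[symmetric] outer_mv by simp
    also have "\<dots> = 2 * p * (B \<bullet> u) * (u \<bullet> B)"
      by (simp add: dotT[of C] u' matrix_vector_mult_scaleR inner_commute)
    finally show ?thesis by (simp add: inner_commute power2_eq_square)
  qed
  define y where "y = p *\<^sub>R w"
  have T4y: "transpose T4 *v y = p *\<^sub>R u"
    using Aiw by (simp add: y_def T4_def Ai_def[symmetric] matrix_vector_mult_scaleR)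
  have T4y': "y v* T4 = p *\<^sub>R u" using T4y by simp
  have r: "T3 - S *v T2 = P *v C"
    by (simp add: T3_def T2_def P_def matrix_vector_mult_add_rdistrib mv_minus) 
  have k1: "y \<bullet> ((M ** transpose T4) *v y) = p * (y \<bullet> (M *v u))" for M :: "real^'n^'n"
    by (simp flip: matrix_vector_mul_assoc add: T4y T4y' matrix_vector_mult_scaleR)
  have k2: "y \<bullet> ((T4 ** transpose M) *v y) = p * (y \<bullet> (M *v u))" for M :: "real^'n^'n"
    apply (simp flip: matrix_vector_mul_assoc)
    apply (subst dotT)
    using dot_lmul_matrix[of y M u] by (simp add: T4y T4y' inner_commute)
  have D: "y \<bullet> ((- (S ** transpose T4) - T4 ** transpose S + T5) *v y) = - 2 * p * (y \<bullet> (P *v u))"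
    by (simp add: T5_def matrix_vector_mult_add_rdistrib matrix_vector_mult_diff_rdistrib
        mv_minus inner_diff_right inner_add_right k1 k2 P_def algebra_simps)
  have Q: "0 \<le> \<gamma>^2 + 2 * (y \<bullet> (P *v C)) + y \<bullet> ((- (S ** transpose T4) - T4 ** transpose S + T5) *v y)"
    using assms(8) unfolding psd_def r block_quad[symmetric] by blast
  have Q2: "\<gamma>^2 + 2 * (y \<bullet> (P *v C)) + y \<bullet> ((- (S ** transpose T4) - T4 ** transpose S + T5) *v y)
      = \<gamma>^2 - 2 * p * (w \<bullet> (P *v w))"
    unfolding D unfolding y_def Cu
    by (simp add: matrix_vector_mult_diff_rdistrib matrix_vector_mult_scaleR inner_diff_right
        inner_diff_left algebra_simps)
  have Aiw': "w v* Ai = u" using Aiw by simp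
  have T6w: "w \<bullet> (T6 *v w) = (B \<bullet> u)^2"
    unfolding T6_def
    by (simp flip: matrix_vector_mul_assoc add: dotT[of w] Ai_def[symmetric] Aiw Aiw' outer_mv
        power2_eq_square inner_commute)
  have Sw: "0 \<le> w \<bullet> (S *v w)"
  proof -
    have "0 \<le> w \<bullet> ((S + transpose S) *v w)" using assms(7) unfolding psd_def by blast
    also have "\<dots> = 2 * (w \<bullet> (S *v w))"
    proof -
      have "w \<bullet> (w v* S) = w \<bullet> (S *v w)"
        using dot_lmul_matrix[of w S w] inner_commute[of w "w v* S"] by simp
      then show ?thesis by (simp add: matrix_vector_mult_add_rdistrib inner_add_right)
    qed
    finally show ?thesis by simp
  qed
  have "w \<bullet> (P *v w) = w \<bullet> (S *v w) + (B \<bullet> u)^2"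
    by (simp add: P_def matrix_vector_mult_add_rdistrib inner_add_right T6w)
  moreover have "0 \<le> 2 * p * (w \<bullet> (S *v w))" using p Sw by simp
  ultimately have "0 \<le> \<gamma>^2 - 2 * p * (B \<bullet> u)^2"
    using Q Q2 by (simp add: algebra_simps)
  then show "\<gamma>^2 \<ge> fH2 A B C p" unfolding f by simp
qed

end
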